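(* Let $G=(N,S,(u_i)_{i\in N})$ be a game with solution set $D\subseteq S$, and let $\alpha,\beta\ge1$. If over $D$ the utility of every player is $\beta$ varied and $\alpha$-lower dependent on coordination, then $\mathrm{PoTA}\ge \mathrm{PoA}/(\alpha\beta)$. If over $D$ the utility of every player is $\beta$ varied and $\alpha$-upper dependent on coordination, then $\mathrm{PoTS}\le\alpha\beta\,\mathrm{PoS}$.
   Context: $T(D)$ is the set of transitions: profiles $t$ such that for every $i$ there is $d\in D$ with $t_i=d_i$. $\mathrm{sw}(s)=\sum_iu_i(s)$, assumed to have positive maximum over $S$; minima/maxima are read as infima/suprema if not attained. $\mathrm{PoA}=\min_{D}\mathrm{sw}/\max_S\mathrm{sw}$, $\mathrm{PoS}=\max_D\mathrm{sw}/\max_S\mathrm{sw}$, $\mathrm{PoTA}=\min_{T(D)}\mathrm{sw}/\max_S\mathrm{sw}$, $\mathrm{PoTS}=\max_{T(D)}\mathrm{sw}/\max_S\mathrm{sw}$. Player $i$'s utility over $A\subseteq S$ is $\alpha$-lower dependent on coordination if $\min_{s\in T(A)}u_i(s)\ge\min_{t\in A}u_i(t)/\alpha$, and $\alpha$-upper dependent on coordination if $\max_{s\in T(A)}u_i(s)\le\alpha\max_{t\in A}u_i(t)$. Player $i$'s utility is $\beta$ varied over $A$ if for all $s,t\in A$, $\mathrm{sw}(s)\ge\mathrm{sw}(t)\Rightarrow u_i(s)\ge u_i(t)/\beta$. *)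

theory Defs
  imports "HOL-Library.Extended_Real" "HOL-Library.FuncSet"
begin

(* A game: finite player set N, strategy sets Si i, profiles S = PiE N Si,
   utilities u i s (real). Min/max over possibly infinite sets are read as
   Inf/Sup in the extended reals. *)

definition transitions :: "'i set \<Rightarrow> ('i \<Rightarrow> 's) set \<Rightarrow> ('i \<Rightarrow> 's) set" where
  "transitions N D = {t \<in> extensional N. \<forall>i\<in>N. \<exists>d\<in>D. t i = d i}"

definition sw :: "'i set \<Rightarrow> ('i \<Rightarrow> ('i \<Rightarrow> 's) \<Rightarrow> real) \<Rightarrow> ('i \<Rightarrow> 's) \<Rightarrow> real" where
  "sw N u s = (\<Sum>i\<in>N. u i s)"

definition opt_sw :: "'i set \<Rightarrow> ('i \<Rightarrow> 's set) \<Rightarrow> ('i \<Rightarrow> ('i \<Rightarrow> 's) \<Rightarrow> real) \<Rightarrow> ereal" where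
  "opt_sw N Si u = (SUP s\<in>PiE N Si. ereal (sw N u s))"

definition PoA where
  "PoA N Si u D = (INF s\<in>D. ereal (sw N u s)) / opt_sw N Si u"

definition PoS where
  "PoS N Si u D = (SUP s\<in>D. ereal (sw N u s)) / opt_sw N Si u"

definition PoTA where
  "PoTA N Si u D = (INF s\<in>transitions N D. ereal (sw N u s)) / opt_sw N Si u"

definition PoTS where
  "PoTS N Si u D = (SUP s\<in>transitions N D. ereal (sw N u s)) / opt_sw N Si u"

definition lower_dep ::
  "'i set \<Rightarrow> ('i \<Rightarrow> ('i \<Rightarrow> 's) \<Rightarrow> real) \<Rightarrow> real \<Rightarrow> 'i \<Rightarrow> ('i \<Rightarrow> 's) set \<Rightarrow> bool" where
  "lower_dep N u \<alpha> i A \<longleftrightarrow>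
     (INF s\<in>transitions N A. ereal (u i s)) \<ge> (INF t\<in>A. ereal (u i t)) / ereal \<alpha>"

definition upper_dep ::
  "'i set \<Rightarrow> ('i \<Rightarrow> ('i \<Rightarrow> 's) \<Rightarrow> real) \<Rightarrow> real \<Rightarrow> 'i \<Rightarrow> ('i \<Rightarrow> 's) set \<Rightarrow> bool" where
  "upper_dep N u \<alpha> i A \<longleftrightarrow>
     (SUP s\<in>transitions N A. ereal (u i s)) \<le> ereal \<alpha> * (SUP t\<in>A. ereal (u i t))"

definition varied ::
  "'i set \<Rightarrow> ('i \<Rightarrow> ('i \<Rightarrow> 's) \<Rightarrow> real) \<Rightarrow> real \<Rightarrow> 'i \<Rightarrow> ('i \<Rightarrow> 's) set \<Rightarrow> bool" where
  "varied N u \<beta> i A \<longleftrightarrow>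
     (\<forall>s\<in>A. \<forall>t\<in>A. sw N u s \<ge> sw N u t \<longrightarrow> u i s \<ge> u i t / \<beta>)"

end

theory Submission
  imports Defs
begin

lemma eps_le:
  fixes x :: ereal
  assumes K: "K > 0" and h: "\<And>e. e > 0 \<Longrightarrow> x \<le> ereal (a + K * e)"
  shows "x \<le> ereal a"
proof (cases x)
  case (real r)
  have "r \<le> a"
  proof (rule field_le_epsilon)
    fix e :: real assume "0 < e"
    then have "x \<le> ereal (a + K * (e / K))" by (intro h) (use K in simp)
    moreover have "K * (e / K) = e" using K by simp
    ultimately show "r \<le> a + e" using real K by simp
  qed
  then show ?thesis using real by simp
next
  case PInf
  then show ?thesis using h[of 1] by simp
qed simp

lemma eps_ge:
  fixes x :: ereal
  assumes K: "K > 0" and h: "\<And>e. e > 0 \<Longrightarrow> ereal (a - K * e) \<le> x"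
  shows "ereal a \<le> x"
proof (cases x)
  case (real r)
  have "a \<le> r"
  proof (rule field_le_epsilon)
    fix e :: real assume "0 < e"
    then have "ereal (a - K * (e / K)) \<le> x" by (intro h) (use K in simp)
    moreover have "K * (e / K) = e" using K by simp
    ultimately show "a \<le> r + e" using real K by simp
  qed
  then show ?thesis using real by simp
next
  case MInf
  then show ?thesis using h[of 1] by simp
qed simp

lemma min_choice:
  fixes g :: "'i \<Rightarrow> real"
  assumes "finite N" "N \<noteq> {}"
  obtains j where "j \<in> N" "\<And>k. k \<in> N \<Longrightarrow> g j \<le> g k"
proof -
  have "Min (g ` N) \<in> g ` N" using assms by simp
  then obtain j where "j \<in> N" "g j = Min (g ` N)" by auto
  then show ?thesis using that assms by auto
qed

lemma max_choice:
  fixes g :: "'i \<Rightarrow> real"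
  assumes "finite N" "N \<noteq> {}"
  obtains j where "j \<in> N" "\<And>k. k \<in> N \<Longrightarrow> g k \<le> g j"
proof -
  have "Max (g ` N) \<in> g ` N" using assms by simp
  then obtain j where "j \<in> N" "g j = Max (g ` N)" by auto
  then show ?thesis using that assms by auto
qed

lemma lower_key:
  assumes fin: "finite N" and ne: "N \<noteq> {}" and a: "\<alpha> \<ge> 1" and b: "\<beta> \<ge> 1"
    and hyp: "\<forall>i\<in>N. varied N u \<beta> i D \<and> lower_dep N u \<alpha> i D"
    and t: "t \<in> transitions N D"
  shows "(INF s\<in>D. ereal (sw N u s)) \<le> ereal (\<alpha> * \<beta> * sw N u t)"
proof (rule eps_le[where K = "\<beta> * real (card N)"])
  show "0 < \<beta> * real (card N)" using b fin ne by (simp add: card_gt_0_iff)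
  fix e :: real assume e: "e > 0"
  have "\<forall>i\<in>N. \<exists>s\<in>D. u i s < \<alpha> * u i t + e"
  proof
    fix i assume i: "i \<in> N"
    let ?c = "INF s\<in>D. ereal (u i s)"
    have "?c / ereal \<alpha> \<le> (INF s\<in>transitions N D. ereal (u i s))"
      using hyp i unfolding lower_dep_def by auto
    also have "\<dots> \<le> ereal (u i t)" using t by (rule INF_lower)
    finally have c: "?c / ereal \<alpha> \<le> ereal (u i t)" .
    have "?c < ereal (\<alpha> * u i t + e)"
    proof (cases ?c)
      case (real r)
      with c a have "r / \<alpha> \<le> u i t" by simp
      then have "r \<le> \<alpha> * u i t" using a by (simp add: field_simps)
      then show ?thesis using real e by simp
    next
      case PInf
      with c a show ?thesis by simp
    qed simp
    then show "\<exists>s\<in>D. u i s < \<alpha> * u i t + e" by (simp add: INF_less_iff)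
  qed
  then obtain f where f: "\<And>i. i \<in> N \<Longrightarrow> f i \<in> D \<and> u i (f i) < \<alpha> * u i t + e"
    by metis
  obtain j where j: "j \<in> N" "\<And>k. k \<in> N \<Longrightarrow> sw N u (f j) \<le> sw N u (f k)"
    using min_choice[OF fin ne, of "\<lambda>k. sw N u (f k)"] by blast
  have v: "u i (f j) / \<beta> \<le> u i (f i)" if i: "i \<in> N" for i
    using hyp i j f[OF i] f[OF j(1)] unfolding varied_def by blast
  have "sw N u (f j) / \<beta> = (\<Sum>i\<in>N. u i (f j) / \<beta>)"
    unfolding sw_def by (simp add: sum_divide_distrib)
  also have "\<dots> \<le> (\<Sum>i\<in>N. u i (f i))" by (rule sum_mono) (use v in auto)
  also have "\<dots> \<le> (\<Sum>i\<in>N. \<alpha> * u i t + e)" by (rule sum_mono) (use f in force)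
  also have "\<dots> = \<alpha> * sw N u t + real (card N) * e"
    unfolding sw_def by (simp add: sum.distrib sum_distrib_left)
  finally have "sw N u (f j) \<le> \<beta> * (\<alpha> * sw N u t + real (card N) * e)"
    using b by (simp add: field_simps)
  then have "sw N u (f j) \<le> \<alpha> * \<beta> * sw N u t + \<beta> * real (card N) * e"
    by (simp add: algebra_simps)
  moreover have "(INF s\<in>D. ereal (sw N u s)) \<le> ereal (sw N u (f j))"
    using f[OF j(1)] by (intro INF_lower) auto
  ultimately show "(INF s\<in>D. ereal (sw N u s)) \<le> ereal (\<alpha> * \<beta> * sw N u t + \<beta> * real (card N) * e)"
    by (smt (verit) ereal_less_eq(3) order_trans)
qed

lemma upper_key:
  assumes fin: "finite N" and ne: "N \<noteq> {}" and a: "\<alpha> \<ge> 1" and b: "\<beta> \<ge> 1"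
    and hyp: "\<forall>i\<in>N. varied N u \<beta> i D \<and> upper_dep N u \<alpha> i D"
    and t: "t \<in> transitions N D"
  shows "ereal (sw N u t / (\<alpha> * \<beta>)) \<le> (SUP s\<in>D. ereal (sw N u s))"
proof (rule eps_ge[where K = "real (card N) / (\<alpha> * \<beta>)"])
  show "0 < real (card N) / (\<alpha> * \<beta>)" using a b fin ne by (simp add: card_gt_0_iff)
  fix e :: real assume e: "e > 0"
  have "\<forall>i\<in>N. \<exists>s\<in>D. (u i t - e) / \<alpha> < u i s"
  proof
    fix i assume i: "i \<in> N"
    let ?c = "SUP s\<in>D. ereal (u i s)"
    have "ereal (u i t) \<le> (SUP s\<in>transitions N D. ereal (u i s))"
      using t by (rule SUP_upper)
    also have "\<dots> \<le> ereal \<alpha> * ?c"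
      using hyp i unfolding upper_dep_def by auto
    finally have c: "ereal (u i t) \<le> ereal \<alpha> * ?c" .
    have "ereal ((u i t - e) / \<alpha>) < ?c"
    proof (cases ?c)
      case (real r)
      with c a have "u i t \<le> \<alpha> * r" by simp
      then have "(u i t - e) / \<alpha> < r" using a e by (simp add: field_simps)
      then show ?thesis using real by simp
    next
      case MInf
      with c a show ?thesis by simp
    qed simp
    then show "\<exists>s\<in>D. (u i t - e) / \<alpha> < u i s" by (simp add: less_SUP_iff)
  qed
  then obtain f where f: "\<And>i. i \<in> N \<Longrightarrow> f i \<in> D \<and> (u i t - e) / \<alpha> < u i (f i)"
    by metis
  obtain j where j: "j \<in> N" "\<And>k. k \<in> N \<Longrightarrow> sw N u (f k) \<le> sw N u (f j)"
    using max_choice[OF fin ne, of "\<lambda>k. sw N u (f k)"] by blast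
  have v: "u i (f i) / \<beta> \<le> u i (f j)" if i: "i \<in> N" for i
    using hyp i j f[OF i] f[OF j(1)] unfolding varied_def by blast
  have "(sw N u t - real (card N) * e) / \<alpha> = (\<Sum>i\<in>N. (u i t - e) / \<alpha>)"
    unfolding sw_def by (simp add: sum_divide_distrib[symmetric] sum_subtractf)
  also have "\<dots> \<le> (\<Sum>i\<in>N. u i (f i))" by (rule sum_mono) (use f in force)
  also have "\<dots> \<le> (\<Sum>i\<in>N. \<beta> * u i (f j))"
  proof (rule sum_mono)
    fix i assume "i \<in> N"
    with v[of i] b show "u i (f i) \<le> \<beta> * u i (f j)" by (simp add: field_simps)
  qed
  also have "\<dots> = \<beta> * sw N u (f j)" unfolding sw_def by (simp add: sum_distrib_left)
  finally have "(sw N u t - real (card N) * e) / \<alpha> \<le> \<beta> * sw N u (f j)" .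
  then have "sw N u t / (\<alpha> * \<beta>) - real (card N) / (\<alpha> * \<beta>) * e \<le> sw N u (f j)"
    using a b by (simp add: field_simps)
  moreover have "ereal (sw N u (f j)) \<le> (SUP s\<in>D. ereal (sw N u s))"
    using f[OF j(1)] by (intro SUP_upper) auto
  ultimately show "ereal (sw N u t / (\<alpha> * \<beta>) - real (card N) / (\<alpha> * \<beta>) * e) \<le> (SUP s\<in>D. ereal (sw N u s))"
    by (smt (verit) ereal_less_eq(3) order_trans)
qed

theorem proposition1:
  fixes N :: "'i set" and Si :: "'i \<Rightarrow> 's set"
    and u :: "'i \<Rightarrow> ('i \<Rightarrow> 's) \<Rightarrow> real"
    and D :: "('i \<Rightarrow> 's) set" and \<alpha> \<beta> :: real
  assumes "finite N"
    and "D \<subseteq> PiE N Si"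
    and "0 < opt_sw N Si u" and "opt_sw N Si u < \<infinity>"
    and "\<alpha> \<ge> 1" and "\<beta> \<ge> 1"
  shows "((\<forall>i\<in>N. varied N u \<beta> i D \<and> lower_dep N u \<alpha> i D)
           \<longrightarrow> PoTA N Si u D \<ge> PoA N Si u D / ereal (\<alpha> * \<beta>))
       \<and> ((\<forall>i\<in>N. varied N u \<beta> i D \<and> upper_dep N u \<alpha> i D)
           \<longrightarrow> PoTS N Si u D \<le> ereal (\<alpha> * \<beta>) * PoS N Si u D)"
proof -
  have ne: "N \<noteq> {}"
  proof
    assume "N = {}"
    then have "opt_sw N Si u = 0" unfolding opt_sw_def sw_def by simp
    with assms(3) show False by simp
  qed
  have ab: "\<alpha> * \<beta> \<ge> 1" using assms(5,6) by (metis mult_mono' less_eq_real_def mult_1 zero_less_one order_trans)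
  let ?o = "opt_sw N Si u"
  have io: "0 \<le> inverse ?o" using assms(3) by (cases ?o) auto
  have P1: "PoTA N Si u D \<ge> PoA N Si u D / ereal (\<alpha> * \<beta>)"
    if hyp: "\<forall>i\<in>N. varied N u \<beta> i D \<and> lower_dep N u \<alpha> i D"
  proof -
    let ?m = "INF s\<in>D. ereal (sw N u s)"
    have "?m / ereal (\<alpha> * \<beta>) \<le> (INF s\<in>transitions N D. ereal (sw N u s))"
    proof (rule INF_greatest)
      fix t assume t: "t \<in> transitions N D"
      have k: "?m \<le> ereal (\<alpha> * \<beta> * sw N u t)"
        using lower_key[OF assms(1) ne assms(5,6) hyp t] .
      show "?m / ereal (\<alpha> * \<beta>) \<le> ereal (sw N u t)"
      proof (cases ?m)
        case (real r)
        with k have "r \<le> \<alpha> * \<beta> * sw N u t" by simp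
        then have "r / (\<alpha> * \<beta>) \<le> sw N u t" using ab by (simp add: field_simps)
        then show ?thesis using real ab assms(5,6) by simp
      next
        case PInf with k show ?thesis by simp
      qed (use ab assms(5,6) in simp)
    qed
    then have "?m / ereal (\<alpha> * \<beta>) * inverse ?o \<le> (INF s\<in>transitions N D. ereal (sw N u s)) * inverse ?o"
      using io by (rule ereal_mult_right_mono)
    then show ?thesis unfolding PoTA_def PoA_def divide_ereal_def by (simp add: ac_simps)
  qed
  have P2: "PoTS N Si u D \<le> ereal (\<alpha> * \<beta>) * PoS N Si u D"
    if hyp: "\<forall>i\<in>N. varied N u \<beta> i D \<and> upper_dep N u \<alpha> i D"
  proof -
    let ?M = "SUP s\<in>D. ereal (sw N u s)"
    have "(SUP s\<in>transitions N D. ereal (sw N u s)) \<le> ereal (\<alpha> * \<beta>) * ?M"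
    proof (rule SUP_least)
      fix t assume t: "t \<in> transitions N D"
      have k: "ereal (sw N u t / (\<alpha> * \<beta>)) \<le> ?M"
        using upper_key[OF assms(1) ne assms(5,6) hyp t] .
      show "ereal (sw N u t) \<le> ereal (\<alpha> * \<beta>) * ?M"
      proof (cases ?M)
        case (real r)
        with k have "sw N u t / (\<alpha> * \<beta>) \<le> r" by simp
        then have "sw N u t \<le> \<alpha> * \<beta> * r" using ab by (simp add: field_simps)
        then show ?thesis using real ab assms(5,6) by simp
      next
        case MInf with k show ?thesis by simp
      qed (use ab assms(5,6) in simp)
    qed
    then have "(SUP s\<in>transitions N D. ereal (sw N u s)) * inverse ?o \<le> ereal (\<alpha> * \<beta>) * ?M * inverse ?o"
      using io by (rule ereal_mult_right_mono)
    then show ?thesis unfolding PoTS_def PoS_def divide_ereal_def by (simp add: ac_simps)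
  qed
  show ?thesis using P1 P2 by blast
qed

end
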